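(* There is a constant $C<\infty$ such that for every $n\ge1$, every row of $M_n^{-1}$ has sum of absolute values of its entries at most $C$. Consequently, although the geodesics between $a_1$ and $a_{5n+3}$ in $F_n$ have unbounded length as $n\to\infty$, for every $n$ and every $f:F_n\to\mathbb C$ with $|f|\le1$, the unique solution of $f(w_1,w_2,w_3)=u_1(w_1)+u_2(w_2)+u_3(w_3)$ on $F_n$ with $u_1(x_1)=u_2(x_2)=u_3(x_3)=0$ satisfies $|u_i|\le C$ on $\Pi_iF_n$, $i=1,2,3$.
   Context: Let $X_1,X_2,X_3$ be pairwise disjoint nonempty sets and $\Omega=X_1\times X_2\times X_3$, with projections $\Pi_i:\Omega\to X_i$. Construction: fix pairwise distinct elements $x_1,y_1,\alpha_{5k-4},\alpha_{5k-1}$ ($k\ge1$) of $X_1$; pairwise distinct elements $x_2,y_2,\alpha_{5k-3},\alpha_{5k}$ ($k\ge1$) of $X_2$; pairwise distinct elements $x_3,z_3,\alpha_{5k-2}$ ($k\ge1$) of $X_3$. Set the convention $\alpha_{-3}:=y_2$, $\alpha_{-2}:=z_3$. Define $a_1=(x_1,x_2,x_3)$, $a_2=(y_1,y_2,x_3)$, $a_3=(y_1,x_2,z_3)$ and for $n\ge1$: $a_{5n-1}=(\alpha_{5n-4},\alpha_{5n-3},\alpha_{5n-2})$, $a_{5n}=(\alpha_{5n-1},\alpha_{5n},\alpha_{5n-2})$, $a_{5n+1}=(\alpha_{5n-4},\alpha_{5n},\alpha_{5n-7})$, $a_{5n+2}=(\alpha_{5n-1},\alpha_{5n-3},x_3)$,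 $a_{5n+3}=(x_1,\alpha_{5n-8},\alpha_{5n-2})$. Let $D_n=\{a_1,\dots,a_{5n+3}\}$, $b_n=(\alpha_{5n-1},y_2,z_3)$ and $F_n=D_n\cup\{b_n\}$. Let $M_n$ be the $0$–$1$ matrix whose rows are indexed by the points $a_2,a_3,\dots,a_{5n+3},b_n$ (in this order) and whose columns are indexed by $y_1,y_2,z_3,\alpha_1,\alpha_2,\dots,\alpha_{5n}$ (in this order), the entry being $1$ exactly when the column element is a coordinate of the row point. ($M_n$ is invertible.) *)

theory Defs
  imports Complex_Main "Jordan_Normal_Form.Matrix"
begin

definition alphaE :: "'a \<Rightarrow> 'a \<Rightarrow> (nat \<Rightarrow> 'a) \<Rightarrow> int \<Rightarrow> 'a" where
  "alphaE y2 z3 \<alpha> k = (if k = -3 then y2 else if k = -2 then z3 else \<alpha> (nat k))"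

definition apt :: "'a \<Rightarrow> 'a \<Rightarrow> 'a \<Rightarrow> 'a \<Rightarrow> 'a \<Rightarrow> 'a \<Rightarrow> (nat \<Rightarrow> 'a) \<Rightarrow> nat \<Rightarrow> 'a \<times> 'a \<times> 'a" where
  "apt x1 y1 x2 y2 x3 z3 \<alpha> i =
    (let A = alphaE y2 z3 \<alpha>; j = int i in
     if i = 1 then (x1, x2, x3)
     else if i = 2 then (y1, y2, x3)
     else if i = 3 then (y1, x2, z3)
     else if j mod 5 = 4 then (let n = (j + 1) div 5 in (A (5*n-4), A (5*n-3), A (5*n-2)))
     else if j mod 5 = 0 then (let n = j div 5 in (A (5*n-1), A (5*n), A (5*n-2)))
     else if j mod 5 = 1 then (let n = (j - 1) div 5 in (A (5*n-4), A (5*n), A (5*n-7)))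
     else if j mod 5 = 2 then (let n = (j - 2) div 5 in (A (5*n-1), A (5*n-3), x3))
     else (let n = (j - 3) div 5 in (x1, A (5*n-8), A (5*n-2))))"

definition bpt :: "'a \<Rightarrow> 'a \<Rightarrow> (nat \<Rightarrow> 'a) \<Rightarrow> nat \<Rightarrow> 'a \<times> 'a \<times> 'a" where
  "bpt y2 z3 \<alpha> n = (\<alpha> (5*n-1), y2, z3)"

definition Dset :: "'a \<Rightarrow> 'a \<Rightarrow> 'a \<Rightarrow> 'a \<Rightarrow> 'a \<Rightarrow> 'a \<Rightarrow> (nat \<Rightarrow> 'a) \<Rightarrow> nat \<Rightarrow> ('a \<times> 'a \<times> 'a) set" where
  "Dset x1 y1 x2 y2 x3 z3 \<alpha> n = apt x1 y1 x2 y2 x3 z3 \<alpha> ` {1..5*n+3}"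

definition Fset :: "'a \<Rightarrow> 'a \<Rightarrow> 'a \<Rightarrow> 'a \<Rightarrow> 'a \<Rightarrow> 'a \<Rightarrow> (nat \<Rightarrow> 'a) \<Rightarrow> nat \<Rightarrow> ('a \<times> 'a \<times> 'a) set" where
  "Fset x1 y1 x2 y2 x3 z3 \<alpha> n = insert (bpt y2 z3 \<alpha> n) (Dset x1 y1 x2 y2 x3 z3 \<alpha> n)"

definition construction :: "'a set \<Rightarrow> 'a set \<Rightarrow> 'a set \<Rightarrow> 'a \<Rightarrow> 'a \<Rightarrow> 'a \<Rightarrow> 'a \<Rightarrow> 'a \<Rightarrow> 'a \<Rightarrow> (nat \<Rightarrow> 'a) \<Rightarrow> bool" where
  "construction X1 X2 X3 x1 y1 x2 y2 x3 z3 \<alpha> \<longleftrightarrow>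
     X1 \<inter> X2 = {} \<and> X1 \<inter> X3 = {} \<and> X2 \<inter> X3 = {} \<and>
     (let S1 = {i. i \<ge> 1 \<and> (i mod 5 = 1 \<or> i mod 5 = 4)};
          S2 = {i. i \<ge> 1 \<and> (i mod 5 = 2 \<or> i mod 5 = 0)};
          S3 = {i. i \<ge> 1 \<and> i mod 5 = 3} in
      x1 \<in> X1 \<and> y1 \<in> X1 \<and> \<alpha> ` S1 \<subseteq> X1 \<and> x1 \<noteq> y1 \<and> x1 \<notin> \<alpha> ` S1 \<and> y1 \<notin> \<alpha> ` S1 \<and> inj_on \<alpha> S1 \<and>
      x2 \<in> X2 \<and> y2 \<in> X2 \<and> \<alpha> ` S2 \<subseteq> X2 \<and> x2 \<noteq> y2 \<and> x2 \<notin> \<alpha> ` S2 \<and> y2 \<notin> \<alpha> ` S2 \<and> inj_on \<alpha> S2 \<and>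
      x3 \<in> X3 \<and> z3 \<in> X3 \<and> \<alpha> ` S3 \<subseteq> X3 \<and> x3 \<noteq> z3 \<and> x3 \<notin> \<alpha> ` S3 \<and> z3 \<notin> \<alpha> ` S3 \<and> inj_on \<alpha> S3)"

definition coords :: "'a \<times> 'a \<times> 'a \<Rightarrow> 'a set" where
  "coords p = {fst p, fst (snd p), snd (snd p)}"

text \<open>Matrix M_n (0-indexed): row r < 5n+2 is the point a_(r+2), row 5n+2 is b_n;
  column 0,1,2 are y1, y2, z3 and column c >= 3 is alpha_(c-2).\<close>
definition Mmat :: "'a \<Rightarrow> 'a \<Rightarrow> 'a \<Rightarrow> 'a \<Rightarrow> 'a \<Rightarrow> 'a \<Rightarrow> (nat \<Rightarrow> 'a) \<Rightarrow> nat \<Rightarrow> real mat" where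
  "Mmat x1 y1 x2 y2 x3 z3 \<alpha> n =
     mat (5*n+3) (5*n+3) (\<lambda>(r, c).
       let p = (if r < 5*n+2 then apt x1 y1 x2 y2 x3 z3 \<alpha> (r+2) else bpt y2 z3 \<alpha> n);
           e = (if c = 0 then y1 else if c = 1 then y2 else if c = 2 then z3 else \<alpha> (c-2))
       in if e \<in> coords p then 1 else 0)"

end

theory Submission
  imports Defs "Jordan_Normal_Form.Determinant"
begin


lemma n2: "norm (a + b :: 'b::real_normed_vector) \<le> norm a + norm b" by (rule norm_triangle_ineq)
lemma n2m: "norm (a - b :: 'b::real_normed_vector) \<le> norm a + norm b" by (rule norm_triangle_ineq4)
lemma n3: "norm (a - b - c :: 'b::real_normed_vector) \<le> norm a + norm b + norm c"
proof -
  have "norm (a - b - c) \<le> norm (a - b) + norm c" by (rule norm_triangle_ineq4)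
  also have "\<dots> \<le> norm a + norm b + norm c" using norm_triangle_ineq4[of a b] by simp
  finally show ?thesis .
qed
lemma n3p: "norm (a - b - c + d :: 'b::real_normed_vector) \<le> norm a + norm b + norm c + norm d"
proof -
  have "norm (a - b - c + d) \<le> norm (a - b - c) + norm d" by (rule norm_triangle_ineq)
  also have "\<dots> \<le> norm a + norm b + norm c + norm d" using n3[of a b c] by simp
  finally show ?thesis .
qed
lemma nsub: "x = y \<Longrightarrow> norm y \<le> b \<Longrightarrow> norm x \<le> b" by simp
lemma n4: "norm (a + b - c - d :: 'b::real_normed_vector) \<le> norm a + norm b + norm c + norm d"
proof -
  have "norm (a + b - c - d) \<le> norm (a + b) + norm c + norm d" by (rule n3)
  also have "\<dots> \<le> norm a + norm b + norm c + norm d" using norm_triangle_ineq[of a b] by simp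
  finally show ?thesis .
qed

lemma id1: "(3::'b::real_normed_field) * q = 2 * (q + r) - (2 * r - r0) - ((y + r0) - (y + q))"
  by (simp add: algebra_simps)
lemma id3: "(2::'b::real_normed_field) * q1 = 2 * (q1 + r2) - (q + r1) - (2 * r2 - r1) + q"
  by (simp add: algebra_simps)
lemma id4: "(2::'b::real_normed_field) * r1 - r0 = (p1 + q1 + r1) + (s1 + t1 + r1) - (s1 + q1) - (p1 + t1 + r0)"
  by (simp add: algebra_simps)

lemma n2x: "norm (a::'b::real_normed_field) \<le> 1 \<Longrightarrow> norm (2*a) \<le> 2"
  by (simp add: norm_mult)

lemma abstract_chain:
  fixes P Q R S T :: "nat \<Rightarrow> 'b::real_normed_field" and Y :: 'b
  assumes n: "n \<ge> 1"
  and E1: "\<And>k. k < n \<Longrightarrow> norm (P (k+1) + Q (k+1) + R (k+1)) \<le> 1"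
  and E2: "\<And>k. k < n \<Longrightarrow> norm (S (k+1) + T (k+1) + R (k+1)) \<le> 1"
  and E3: "\<And>k. k < n \<Longrightarrow> norm (P (k+1) + T (k+1) + R k) \<le> 1"
  and E4: "\<And>k. k < n \<Longrightarrow> norm (S (k+1) + Q (k+1)) \<le> 1"
  and E5: "\<And>k. k < n \<Longrightarrow> norm (Q k + R (k+1)) \<le> 1"
  and Ya: "norm (Y + Q 0) \<le> 1" and Yb: "norm (Y + R 0) \<le> 1"
  and Bn: "norm (S n + Q 0 + R 0) \<le> 1"
  shows "norm Y \<le> 20 \<and> (\<forall>k\<le>n. norm (Q k) \<le> 20 \<and> norm (R k) \<le> 20) \<and>
    (\<forall>k<n. norm (P (k+1)) \<le> 20 \<and> norm (S (k+1)) \<le> 20 \<and> norm (T (k+1)) \<le> 20)"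
proof -
  have D: "norm (2 * R (k+1) - R k) \<le> 4" if "k < n" for k
  proof -
    have "2 * R (k+1) - R k = (P (k+1) + Q (k+1) + R (k+1)) + (S (k+1) + T (k+1) + R (k+1))
       - (S (k+1) + Q (k+1)) - (P (k+1) + T (k+1) + R k)" by (rule id4)
    then have "norm (2 * R (k+1) - R k) \<le> norm (P (k+1) + Q (k+1) + R (k+1)) + norm (S (k+1) + T (k+1) + R (k+1))
       + norm (S (k+1) + Q (k+1)) + norm (P (k+1) + T (k+1) + R k)" by (rule nsub[OF _ n4])
    then show ?thesis using E1[OF that] E2[OF that] E3[OF that] E4[OF that] by linarith
  qed
  have Q0: "norm (Q 0) \<le> 8/3"
  proof -
    have "3 * Q 0 = 2 * (Q 0 + R (0+1)) - (2 * R (0+1) - R 0) - ((Y + R 0) - (Y + Q 0))"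
      by (rule id1)
    then have "norm (3 * Q 0) \<le> norm (2 * (Q 0 + R (0+1))) + norm (2 * R (0+1) - R 0) + norm ((Y + R 0) - (Y + Q 0))"
      by (rule nsub[OF _ n3])
    also have "\<dots> \<le> 2 + 4 + 2"
    proof -
      have "norm (2 * (Q 0 + R (0+1))) \<le> 2" by (rule n2x) (use E5[of 0] n in simp)
      moreover have "norm ((Y + R 0) - (Y + Q 0)) \<le> 2" using n2m[of "Y + R 0" "Y + Q 0"] Ya Yb by simp
      ultimately show ?thesis using D[of 0] n by simp
    qed
    finally show ?thesis by (simp add: norm_mult)
  qed
  have Qstep: "norm (Q (k+1)) \<le> (7 + norm (Q k)) / 2" if "k + 1 < n" for k
  proof -
    have "2 * Q (k+1) = 2 * (Q (k+1) + R (k+1+1)) - (Q k + R (k+1)) - (2 * R (k+1+1) - R (k+1)) + Q k"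
      by (rule id3)
    then have "norm (2 * Q (k+1)) \<le> norm (2 * (Q (k+1) + R (k+1+1))) + norm (Q k + R (k+1)) + norm (2 * R (k+1+1) - R (k+1)) + norm (Q k)"
      by (rule nsub[OF _ n3p])
    moreover have "norm (2 * (Q (k+1) + R (k+1+1))) \<le> 2" by (rule n2x) (use E5[of "k+1"] that in simp)
    moreover have "norm (Q k + R (k+1)) \<le> 1" using E5[of k] that by simp
    moreover have "norm (2 * R (k+1+1) - R (k+1)) \<le> 4" using D[of "k+1"] that by simp
    ultimately show ?thesis by (simp add: norm_mult)
  qed
  have Qlt: "norm (Q k) \<le> 7" if "k < n" for k
    using that
  proof (induction k)
    case 0 then show ?case using Q0 by simp
  next
    case (Suc k)
    then have "norm (Q (k+1)) \<le> (7 + norm (Q k)) / 2" using Qstep by simp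
    with Suc show ?case by simp
  qed
  have R0: "norm (R 0) \<le> 5"
  proof -
    have "R 0 = (Y + R 0) - (Y + Q 0) + Q 0" by simp
    then have "norm (R 0) \<le> norm ((Y + R 0) - (Y + Q 0)) + norm (Q 0)" by (rule nsub[OF _ norm_triangle_ineq])
    moreover have "norm ((Y + R 0) - (Y + Q 0)) \<le> 2" using n2m[of "Y + R 0" "Y + Q 0"] Ya Yb by simp
    ultimately show ?thesis using Q0 by simp
  qed
  have Sn: "norm (S n) \<le> 9"
  proof -
    have "S n = (S n + Q 0 + R 0) - Q 0 - R 0" by simp
    then have "norm (S n) \<le> norm (S n + Q 0 + R 0) + norm (Q 0) + norm (R 0)" by (rule nsub[OF _ n3])
    then show ?thesis using Bn Q0 R0 by simp
  qed
  have Qn: "norm (Q n) \<le> 10"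
  proof -
    obtain m where m: "n = m + 1" using n by (intro that[of "n - 1"]) simp
    have "Q n = (S n + Q n) - S n" by simp
    then have "norm (Q n) \<le> norm (S n + Q n) + norm (S n)" by (rule nsub[OF _ n2m])
    moreover have "norm (S n + Q n) \<le> 1" using E4[of m] m by simp
    ultimately show ?thesis using Sn by simp
  qed
  have Qle: "norm (Q k) \<le> 10" if "k \<le> n" for k
    using Qlt[of k] Qn that by (cases "k = n") auto
  have Rs: "norm (R (k+1)) \<le> 8" if "k < n" for k
  proof -
    have "R (k+1) = (Q k + R (k+1)) - Q k" by simp
    then have "norm (R (k+1)) \<le> norm (Q k + R (k+1)) + norm (Q k)" by (rule nsub[OF _ n2m])
    then show ?thesis using E5[OF that] Qlt[OF that] by simp
  qed
  have Rle: "norm (R k) \<le> 8" if "k \<le> n" for k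
  proof (cases k)
    case 0 then show ?thesis using R0 by simp
  next
    case (Suc m) then show ?thesis using Rs[of m] that by simp
  qed
  have Ss: "norm (S (k+1)) \<le> 11" if "k < n" for k
  proof -
    have "S (k+1) = (S (k+1) + Q (k+1)) - Q (k+1)" by simp
    then have "norm (S (k+1)) \<le> norm (S (k+1) + Q (k+1)) + norm (Q (k+1))" by (rule nsub[OF _ n2m])
    then show ?thesis using E4[OF that] Qle[of "k+1"] that by simp
  qed
  have Ps: "norm (P (k+1)) \<le> 19" if "k < n" for k
  proof -
    have "P (k+1) = (P (k+1) + Q (k+1) + R (k+1)) - Q (k+1) - R (k+1)" by simp
    then have "norm (P (k+1)) \<le> norm (P (k+1) + Q (k+1) + R (k+1)) + norm (Q (k+1)) + norm (R (k+1))" by (rule nsub[OF _ n3])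
    then show ?thesis using E1[OF that] Qle[of "k+1"] Rle[of "k+1"] that by simp
  qed
  have Ts: "norm (T (k+1)) \<le> 20" if "k < n" for k
  proof -
    have "T (k+1) = (S (k+1) + T (k+1) + R (k+1)) - S (k+1) - R (k+1)" by simp
    then have "norm (T (k+1)) \<le> norm (S (k+1) + T (k+1) + R (k+1)) + norm (S (k+1)) + norm (R (k+1))" by (rule nsub[OF _ n3])
    then show ?thesis using E2[OF that] Ss[OF that] Rle[of "k+1"] that by simp
  qed
  have Yb2: "norm Y \<le> 4"
  proof -
    have "Y = (Y + Q 0) - Q 0" by simp
    then have "norm Y \<le> norm (Y + Q 0) + norm (Q 0)" by (rule nsub[OF _ n2m])
    then show ?thesis using Ya Q0 by simp
  qed
  have a: "norm (Q k) \<le> 20 \<and> norm (R k) \<le> 20" if "k \<le> n" for k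
    using Qle[OF that] Rle[OF that] by linarith
  have b: "norm (P (k+1)) \<le> 20 \<and> norm (S (k+1)) \<le> 20 \<and> norm (T (k+1)) \<le> 20" if "k < n" for k
    using Ps[OF that] Ss[OF that] Ts[OF that] by linarith
  have c: "norm Y \<le> 20" using Yb2 by linarith
  show ?thesis using a b c by blast
qed



lemma apt1: "apt x1 y1 x2 y2 x3 z3 \<alpha> (5*k+4) = (\<alpha>(5*k+1), \<alpha>(5*k+2), \<alpha>(5*k+3))"
  unfolding apt_def alphaE_def Let_def by (simp add: nat_add_distrib nat_mult_distrib add.commute)
lemma apt2: "apt x1 y1 x2 y2 x3 z3 \<alpha> (5*k+5) = (\<alpha>(5*k+4), \<alpha>(5*k+5), \<alpha>(5*k+3))"
  unfolding apt_def alphaE_def Let_def by (simp add: nat_add_distrib nat_mult_distrib add.commute)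
lemma apt3: "apt x1 y1 x2 y2 x3 z3 \<alpha> (5*k+6) = (\<alpha>(5*k+1), \<alpha>(5*k+5), alphaE y2 z3 \<alpha> (5*int k - 2))"
  unfolding apt_def Let_def alphaE_def by (simp add: nat_add_distrib nat_mult_distrib add.commute)
lemma apt4: "apt x1 y1 x2 y2 x3 z3 \<alpha> (5*k+7) = (\<alpha>(5*k+4), \<alpha>(5*k+2), x3)"
  unfolding apt_def alphaE_def Let_def by (simp add: nat_add_distrib nat_mult_distrib add.commute)
lemma apt5: "apt x1 y1 x2 y2 x3 z3 \<alpha> (5*k+8) = (x1, alphaE y2 z3 \<alpha> (5*int k - 3), \<alpha>(5*k+3))"
  unfolding apt_def Let_def alphaE_def by (simp add: nat_add_distrib nat_mult_distrib add.commute)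

lemma alphaE_m2: "alphaE y2 z3 \<alpha> (5*int k - 2) = (if k = 0 then z3 else \<alpha> (5*k-2))"
  unfolding alphaE_def by (cases k) (auto simp: nat_add_distrib nat_mult_distrib)
lemma alphaE_m3: "alphaE y2 z3 \<alpha> (5*int k - 3) = (if k = 0 then y2 else \<alpha> (5*k-3))"
  unfolding alphaE_def by (cases k) (auto simp: nat_add_distrib nat_mult_distrib)

lemma apt_two: "apt x1 y1 x2 y2 x3 z3 \<alpha> 2 = (y1, y2, x3)" unfolding apt_def by simp
lemma apt_three: "apt x1 y1 x2 y2 x3 z3 \<alpha> 3 = (y1, x2, z3)" unfolding apt_def by simp

lemma chain:
  fixes W :: "'a \<Rightarrow> 'b::real_normed_field"
  assumes n: "n \<ge> 1"
  and W0: "W x1 = 0" "W x2 = 0" "W x3 = 0"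
  and pts: "\<And>i. 2 \<le> i \<Longrightarrow> i \<le> 5*n+3 \<Longrightarrow>
     norm (W (fst (apt x1 y1 x2 y2 x3 z3 \<alpha> i)) + W (fst (snd (apt x1 y1 x2 y2 x3 z3 \<alpha> i)))
       + W (snd (snd (apt x1 y1 x2 y2 x3 z3 \<alpha> i)))) \<le> 1"
  and bp: "norm (W (\<alpha> (5*n-1)) + W y2 + W z3) \<le> 1"
  shows "norm (W y1) \<le> 20 \<and> norm (W y2) \<le> 20 \<and> norm (W z3) \<le> 20 \<and>
    (\<forall>m. 1 \<le> m \<and> m \<le> 5*n \<longrightarrow> norm (W (\<alpha> m)) \<le> 20)"
proof -
  define P where "P j = W (\<alpha> (5*j-4))" for j
  define S where "S j = W (\<alpha> (5*j-1))" for j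
  define T where "T j = W (\<alpha> (5*j))" for j
  define Q where "Q j = (if j = 0 then W y2 else W (\<alpha> (5*j-3)))" for j
  define R where "R j = (if j = 0 then W z3 else W (\<alpha> (5*j-2)))" for j
  have PS: "P (k+1) = W (\<alpha> (5*k+1))" for k
    unfolding P_def by (rule arg_cong[where f="\<lambda>i. W (\<alpha> i)"]) simp
  have QS: "Q (k+1) = W (\<alpha> (5*k+2))" for k
    unfolding Q_def by simp
  have RS: "R (k+1) = W (\<alpha> (5*k+3))" for k
    unfolding R_def by (simp add: add.commute)
  have SS: "S (k+1) = W (\<alpha> (5*k+4))" for k
    unfolding S_def by (rule arg_cong[where f="\<lambda>i. W (\<alpha> i)"]) simp
  have TS: "T (k+1) = W (\<alpha> (5*k+5))" for k
    unfolding T_def by (rule arg_cong[where f="\<lambda>i. W (\<alpha> i)"]) simp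
  have R0: "R 0 = W z3" and Q0: "Q 0 = W y2" unfolding R_def Q_def by simp_all
  have Rk: "R k = W (alphaE y2 z3 \<alpha> (5*int k - 2))" for k
    unfolding R_def alphaE_m2 by simp
  have Qk: "Q k = W (alphaE y2 z3 \<alpha> (5*int k - 3))" for k
    unfolding Q_def alphaE_m3 by simp
  have E1: "norm (P (k+1) + Q (k+1) + R (k+1)) \<le> 1" if "k < n" for k
    unfolding PS QS RS using pts[of "5*k+4", unfolded apt1] that by simp
  have E2: "norm (S (k+1) + T (k+1) + R (k+1)) \<le> 1" if "k < n" for k
    unfolding SS TS RS using pts[of "5*k+5", unfolded apt2] that by simp
  have E3: "norm (P (k+1) + T (k+1) + R k) \<le> 1" if "k < n" for k
    unfolding PS TS Rk using pts[of "5*k+6", unfolded apt3] that by simp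
  have E4: "norm (S (k+1) + Q (k+1)) \<le> 1" if "k < n" for k
    unfolding SS QS using pts[of "5*k+7", unfolded apt4] that W0 by simp
  have E5: "norm (Q k + R (k+1)) \<le> 1" if "k < n" for k
    unfolding Qk RS using pts[of "5*k+8", unfolded apt5] that W0 by simp
  have Ya: "norm (W y1 + Q 0) \<le> 1"
    unfolding Q0 using pts[of 2, unfolded apt_two] n W0 by simp
  have Yb: "norm (W y1 + R 0) \<le> 1"
    unfolding R0 using pts[of 3, unfolded apt_three] n W0 by simp
  have Bn: "norm (S n + Q 0 + R 0) \<le> 1"
    using bp unfolding S_def Q0 R0 by simp
  note ac = abstract_chain[OF n E1 E2 E3 E4 E5 Ya Yb Bn]
  have "norm (W (\<alpha> m)) \<le> 20" if mm: "1 \<le> m" "m \<le> 5*n" for m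
  proof -
    obtain k where k: "k < n" "5*k+1 \<le> m" "m \<le> 5*k+5"
    proof -
      have "(m-1) div 5 < n \<and> 5*((m-1) div 5)+1 \<le> m \<and> m \<le> 5*((m-1) div 5)+5"
        using mm by presburger
      then show ?thesis using that by blast
    qed
    have b: "norm (P (k+1)) \<le> 20" "norm (Q (k+1)) \<le> 20" "norm (R (k+1)) \<le> 20"
      "norm (S (k+1)) \<le> 20" "norm (T (k+1)) \<le> 20" using ac k(1) by auto
    have "m = 5*k+1 \<or> m = 5*k+2 \<or> m = 5*k+3 \<or> m = 5*k+4 \<or> m = 5*k+5" using k by auto
    then show ?thesis using b unfolding PS QS RS SS TS by auto
  qed
  moreover have "norm (W y2) \<le> 20" "norm (W z3) \<le> 20" using ac n unfolding Q0[symmetric] R0[symmetric] by auto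
  ultimately show ?thesis using ac by blast
qed



lemma cons_basic:
  assumes c: "construction X1 X2 X3 x1 y1 x2 y2 x3 z3 \<alpha>"
  shows "X1 \<inter> X2 = {}" "X1 \<inter> X3 = {}" "X2 \<inter> X3 = {}"
    "x1 \<in> X1" "y1 \<in> X1" "x2 \<in> X2" "y2 \<in> X2" "x3 \<in> X3" "z3 \<in> X3"
    "x1 \<noteq> y1" "x2 \<noteq> y2" "x3 \<noteq> z3"
    "\<alpha> (5*k+1) \<in> X1" "\<alpha> (5*k+4) \<in> X1" "\<alpha> (5*k+2) \<in> X2" "\<alpha> (5*k+5) \<in> X2" "\<alpha> (5*k+3) \<in> X3"
proof -
  define S1 where "S1 = {i::nat. i \<ge> 1 \<and> (i mod 5 = 1 \<or> i mod 5 = 4)}"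
  define S2 where "S2 = {i::nat. i \<ge> 1 \<and> (i mod 5 = 2 \<or> i mod 5 = 0)}"
  define S3 where "S3 = {i::nat. i \<ge> 1 \<and> i mod 5 = 3}"
  note cc = c[unfolded construction_def Let_def, folded S1_def S2_def S3_def]
  show "X1 \<inter> X2 = {}" "X1 \<inter> X3 = {}" "X2 \<inter> X3 = {}"
    "x1 \<in> X1" "y1 \<in> X1" "x2 \<in> X2" "y2 \<in> X2" "x3 \<in> X3" "z3 \<in> X3"
    "x1 \<noteq> y1" "x2 \<noteq> y2" "x3 \<noteq> z3" using cc by auto
  have "5*k+1 \<in> S1" "5*k+4 \<in> S1" "5*k+2 \<in> S2" "5*k+5 \<in> S2" "5*k+3 \<in> S3"
    unfolding S1_def S2_def S3_def mem_Collect_eq by presburger+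
  then show "\<alpha> (5*k+1) \<in> X1" "\<alpha> (5*k+4) \<in> X1" "\<alpha> (5*k+2) \<in> X2" "\<alpha> (5*k+5) \<in> X2" "\<alpha> (5*k+3) \<in> X3"
    using cc by auto
qed

lemma cons_alpha:
  assumes c: "construction X1 X2 X3 x1 y1 x2 y2 x3 z3 \<alpha>"
  shows "\<And>i j. 1 \<le> i \<Longrightarrow> 1 \<le> j \<Longrightarrow> \<alpha> i = \<alpha> j \<Longrightarrow> i = j"
    "\<And>i. 1 \<le> i \<Longrightarrow> \<alpha> i \<noteq> x1" "\<And>i. 1 \<le> i \<Longrightarrow> \<alpha> i \<noteq> y1"
    "\<And>i. 1 \<le> i \<Longrightarrow> \<alpha> i \<noteq> x2" "\<And>i. 1 \<le> i \<Longrightarrow> \<alpha> i \<noteq> y2"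
    "\<And>i. 1 \<le> i \<Longrightarrow> \<alpha> i \<noteq> x3" "\<And>i. 1 \<le> i \<Longrightarrow> \<alpha> i \<noteq> z3"
    "\<And>i. 1 \<le> i \<Longrightarrow> \<alpha> i \<in> X1 \<union> X2 \<union> X3"
proof -
  define S1 where "S1 = {i::nat. i \<ge> 1 \<and> (i mod 5 = 1 \<or> i mod 5 = 4)}"
  define S2 where "S2 = {i::nat. i \<ge> 1 \<and> (i mod 5 = 2 \<or> i mod 5 = 0)}"
  define S3 where "S3 = {i::nat. i \<ge> 1 \<and> i mod 5 = 3}"
  note cc = c[unfolded construction_def Let_def, folded S1_def S2_def S3_def]
  have cls: "i \<in> S1 \<or> i \<in> S2 \<or> i \<in> S3" if "1 \<le> i" for i
    unfolding S1_def S2_def S3_def using that by (auto; presburger)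
  have sub: "\<alpha> ` S1 \<subseteq> X1" "\<alpha> ` S2 \<subseteq> X2" "\<alpha> ` S3 \<subseteq> X3"
    using cc by auto
  have m1: "\<alpha> i \<in> X1" if "i \<in> S1" for i using sub(1) that by blast
  have m2: "\<alpha> i \<in> X2" if "i \<in> S2" for i using sub(2) that by blast
  have m3: "\<alpha> i \<in> X3" if "i \<in> S3" for i using sub(3) that by blast
  have i1: "inj_on \<alpha> S1" "inj_on \<alpha> S2" "inj_on \<alpha> S3" using cc by auto
  have dd: "X1 \<inter> X2 = {}" "X1 \<inter> X3 = {}" "X2 \<inter> X3 = {}" using cc by auto
  have d12: "t \<notin> X2" if "t \<in> X1" for t using dd that by blast
  have d13: "t \<notin> X3" if "t \<in> X1" for t using dd that by blast
  have d23: "t \<notin> X3" if "t \<in> X2" for t using dd that by blast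
  have mem: "x1 \<in> X1" "y1 \<in> X1" "x2 \<in> X2" "y2 \<in> X2" "x3 \<in> X3" "z3 \<in> X3" using cc by auto
  have nn: "x1 \<notin> \<alpha> ` S1" "y1 \<notin> \<alpha> ` S1" "x2 \<notin> \<alpha> ` S2" "y2 \<notin> \<alpha> ` S2"
    "x3 \<notin> \<alpha> ` S3" "z3 \<notin> \<alpha> ` S3" using cc by auto
  show "i = j" if "1 \<le> i" "1 \<le> j" "\<alpha> i = \<alpha> j" for i j
  proof -
    from cls[OF that(1)] cls[OF that(2)] show ?thesis
    proof (elim disjE)
      assume "i \<in> S1" "j \<in> S1" then show ?thesis using inj_onD[OF i1(1)] that(3) by blast
    next
      assume "i \<in> S2" "j \<in> S2" then show ?thesis using inj_onD[OF i1(2)] that(3) by blast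
    next
      assume "i \<in> S3" "j \<in> S3" then show ?thesis using inj_onD[OF i1(3)] that(3) by blast
    qed (use m1 m2 m3 d12 d13 d23 that(3) in metis)+
  qed
  show "\<alpha> i \<noteq> x1" "\<alpha> i \<noteq> y1" "\<alpha> i \<noteq> x2" "\<alpha> i \<noteq> y2" "\<alpha> i \<noteq> x3" "\<alpha> i \<noteq> z3"
    "\<alpha> i \<in> X1 \<union> X2 \<union> X3" if "1 \<le> i" for i
    using cls[OF that] m1 m2 m3 d12 d13 d23 mem nn by (metis image_eqI Un_iff)+
qed



lemma apt_one: "apt x1 y1 x2 y2 x3 z3 \<alpha> 1 = (x1, x2, x3)" unfolding apt_def by simp

lemma idx_cases:
  assumes "1 \<le> (i::nat)" "i \<le> 5*n+3"
  obtains "i = 1" | "i = 2" | "i = 3"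
  | k where "k < n" "i = 5*k+4" | k where "k < n" "i = 5*k+5" | k where "k < n" "i = 5*k+6"
  | k where "k < n" "i = 5*k+7" | k where "k < n" "i = 5*k+8"
proof -
  consider "i \<le> 3" | "i \<ge> 4" by linarith
  then show ?thesis
  proof cases
    case 1 then show ?thesis using assms that(1-3) by linarith
  next
    case 2
    define k where "k = (i - 4) div 5"
    have "k < n" unfolding k_def using 2 assms by linarith
    moreover have "i = 5*k+4 \<or> i = 5*k+5 \<or> i = 5*k+6 \<or> i = 5*k+7 \<or> i = 5*k+8"
      unfolding k_def using 2 by linarith
    ultimately show ?thesis using that(4-8) by blast
  qed
qed

lemma pt_props:
  assumes c: "construction X1 X2 X3 x1 y1 x2 y2 x3 z3 \<alpha>" and n: "n \<ge> 1"
  and p: "p \<in> Fset x1 y1 x2 y2 x3 z3 \<alpha> n"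
  shows "fst p \<in> X1 \<inter> ({x1,x2,x3,y1,y2,z3} \<union> \<alpha> ` {1..5*n}) \<and>
         fst (snd p) \<in> X2 \<inter> ({x1,x2,x3,y1,y2,z3} \<union> \<alpha> ` {1..5*n}) \<and>
         snd (snd p) \<in> X3 \<inter> ({x1,x2,x3,y1,y2,z3} \<union> \<alpha> ` {1..5*n})"
proof -
  define G where "G = {x1,x2,x3,y1,y2,z3} \<union> \<alpha> ` {1..5*n}"
  note cb = cons_basic[OF c]
  have img: "\<alpha> (5*k+j) \<in> G" if "k < n" "1 \<le> j" "j \<le> 5" for k j
    unfolding G_def using that by (intro UnI2 imageI) auto
  have base: "x1 \<in> G" "x2 \<in> G" "x3 \<in> G" "y1 \<in> G" "y2 \<in> G" "z3 \<in> G" unfolding G_def by auto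
  have m2: "alphaE y2 z3 \<alpha> (5*int k - 2) \<in> X3 \<inter> G" if "k < n" for k
  proof (cases k)
    case 0 then show ?thesis using cb base by (simp add: alphaE_def)
  next
    case (Suc k')
    have "alphaE y2 z3 \<alpha> (5*int k - 2) = \<alpha> (5*k'+3)" unfolding alphaE_m2 Suc by (simp add: add.commute)
    then show ?thesis using cb(17)[of k'] img[of k' 3] that Suc by simp
  qed
  have m3: "alphaE y2 z3 \<alpha> (5*int k - 3) \<in> X2 \<inter> G" if "k < n" for k
  proof (cases k)
    case 0 then show ?thesis using cb base by (simp add: alphaE_def)
  next
    case (Suc k')
    have "alphaE y2 z3 \<alpha> (5*int k - 3) = \<alpha> (5*k'+2)" unfolding alphaE_m3 Suc by (simp add: add.commute)
    then show ?thesis using cb(15)[of k'] img[of k' 2] that Suc by simp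
  qed
  have "fst p \<in> X1 \<inter> G \<and> fst (snd p) \<in> X2 \<inter> G \<and> snd (snd p) \<in> X3 \<inter> G"
  proof (cases "p = bpt y2 z3 \<alpha> n")
    case True
    obtain k where k: "n = k+1" using n by (intro that[of "n - 1"]) simp
    have "p = (\<alpha> (5*k+4), y2, z3)" unfolding True bpt_def k by (simp add: add.commute)
    then show ?thesis using cb(7,9,14) base img[of k 4] k by simp
  next
    case False
    then obtain i where i: "1 \<le> i" "i \<le> 5*n+3" "p = apt x1 y1 x2 y2 x3 z3 \<alpha> i"
      using p unfolding Fset_def Dset_def by auto
    from idx_cases[OF i(1,2)] show ?thesis
    proof cases
      case 1 then show ?thesis using i(3) cb base apt_one[of x1 y1 x2 y2 x3 z3 \<alpha>] by simp
    next
      case 2 then show ?thesis using i(3) cb base apt_two[of x1 y1 x2 y2 x3 z3 \<alpha>] by simp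
    next
      case 3 then show ?thesis using i(3) cb base apt_three[of x1 y1 x2 y2 x3 z3 \<alpha>] by simp
    next
      case (4 k) then show ?thesis using i(3) cb(13,15,17)[of k] img[of k 1] img[of k 2] img[of k 3]
        by (simp add: apt1)
    next
      case (5 k) then show ?thesis using i(3) cb(14,16,17)[of k] img[of k 4] img[of k 5] img[of k 3]
        by (simp add: apt2)
    next
      case (6 k) then show ?thesis using i(3) cb(13,16)[of k] img[of k 1] img[of k 5] m2[of k]
        by (simp add: apt3)
    next
      case (7 k) then show ?thesis using i(3) cb(14,15)[of k] cb(8) img[of k 4] img[of k 2] base
        by (simp add: apt4)
    next
      case (8 k) then show ?thesis using i(3) cb(17)[of k] cb(4) img[of k 3] m3[of k] base
        by (simp add: apt5)
    qed
  qed
  then show ?thesis unfolding G_def .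
qed

lemma sum_pick:
  fixes g :: "nat \<Rightarrow> 'b::comm_monoid_add"
  assumes inj: "inj_on e I" and fin: "finite I" and dist: "A \<noteq> B" "A \<noteq> C" "B \<noteq> C"
  defines "Wf \<equiv> \<lambda>t. if t \<in> e ` I then g (inv_into I e t) else 0"
  shows "(\<Sum>c\<in>I. if e c \<in> {A,B,C} then g c else 0) = Wf A + Wf B + Wf C"
proof -
  define h where "h t = (if t \<in> {A,B,C} then Wf t else 0)" for t
  have "(\<Sum>c\<in>I. if e c \<in> {A,B,C} then g c else 0) = (\<Sum>c\<in>I. h (e c))"
    by (rule sum.cong) (auto simp: h_def Wf_def inv_into_f_f[OF inj])
  also have "\<dots> = (\<Sum>t\<in>e ` I. h t)" by (simp add: sum.reindex[OF inj])
  also have "\<dots> = (\<Sum>t\<in>e ` I \<union> {A,B,C}. h t)"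
    by (rule sum.mono_neutral_left) (auto simp: fin h_def Wf_def)
  also have "\<dots> = (\<Sum>t\<in>{A,B,C}. h t)"
    by (rule sum.mono_neutral_right) (auto simp: fin h_def)
  also have "\<dots> = Wf A + Wf B + Wf C" using dist by (simp add: h_def add.assoc)
  finally show ?thesis .
qed



definition ecol :: "'a \<Rightarrow> 'a \<Rightarrow> 'a \<Rightarrow> (nat \<Rightarrow> 'a) \<Rightarrow> nat \<Rightarrow> 'a" where
  "ecol y1 y2 z3 \<alpha> c = (if c = 0 then y1 else if c = 1 then y2 else if c = 2 then z3 else \<alpha> (c-2))"

lemma ecol_inj:
  assumes c: "construction X1 X2 X3 x1 y1 x2 y2 x3 z3 \<alpha>"
  shows "inj_on (ecol y1 y2 z3 \<alpha>) I"
proof (rule inj_onI)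
  fix a b assume "a \<in> I" "b \<in> I" and eq: "ecol y1 y2 z3 \<alpha> a = ecol y1 y2 z3 \<alpha> b"
  note cb = cons_basic[OF c] and ca = cons_alpha[OF c]
  have ne: "y1 \<noteq> y2" "y1 \<noteq> z3" "y2 \<noteq> z3" using cb(1-9) by blast+
  show "a = b"
  proof (cases "a \<le> 2")
    case True
    then show ?thesis
    proof (cases "b \<le> 2")
      case True
      with \<open>a \<le> 2\<close> eq ne show ?thesis unfolding ecol_def by (auto split: if_splits)
    next
      case False
      then have "1 \<le> b - 2" by linarith
      with \<open>a \<le> 2\<close> eq ca(3,5,7)[of "b-2"] False show ?thesis unfolding ecol_def by (auto split: if_splits)
    qed
  next
    case False
    then have A: "1 \<le> a - 2" by linarith
    show ?thesis
    proof (cases "b \<le> 2")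
      case True
      with A eq ca(3,5,7)[of "a-2"] False show ?thesis unfolding ecol_def by (auto split: if_splits)
    next
      case F2: False
      then have "1 \<le> b - 2" by linarith
      with A eq ca(1)[of "a-2" "b-2"] False F2 show ?thesis unfolding ecol_def by (auto split: if_splits)
    qed
  qed
qed

lemma ecol_x:
  assumes c: "construction X1 X2 X3 x1 y1 x2 y2 x3 z3 \<alpha>"
  shows "x1 \<notin> range (ecol y1 y2 z3 \<alpha>)" "x2 \<notin> range (ecol y1 y2 z3 \<alpha>)" "x3 \<notin> range (ecol y1 y2 z3 \<alpha>)"
proof -
  note cb = cons_basic[OF c] and ca = cons_alpha[OF c]
  have ne: "x1 \<noteq> y2" "x1 \<noteq> z3" "x2 \<noteq> y1" "x2 \<noteq> z3" "x3 \<noteq> y1" "x3 \<noteq> y2" using cb(1-9) by blast+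
  define e where "e = ecol y1 y2 z3 \<alpha>"
  have ev: "e c = y1 \<or> e c = y2 \<or> e c = z3 \<or> (1 \<le> c - 2 \<and> e c = \<alpha> (c-2))" for c
    unfolding ecol_def e_def by auto
  show "x1 \<notin> range (ecol y1 y2 z3 \<alpha>)"
  proof
    assume "x1 \<in> range (ecol y1 y2 z3 \<alpha>)"
    then obtain c where "x1 = e c" unfolding e_def by auto
    then show False using ev[of c] ne cb(10) ca(2)[of "c-2"] by auto
  qed
  show "x2 \<notin> range (ecol y1 y2 z3 \<alpha>)"
  proof
    assume "x2 \<in> range (ecol y1 y2 z3 \<alpha>)"
    then obtain c where "x2 = e c" unfolding e_def by auto
    then show False using ev[of c] ne cb(11) ca(4)[of "c-2"] by auto
  qed
  show "x3 \<notin> range (ecol y1 y2 z3 \<alpha>)"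
  proof
    assume "x3 \<in> range (ecol y1 y2 z3 \<alpha>)"
    then obtain c where "x3 = e c" unfolding e_def by auto
    then show False using ev[of c] ne cb(12) ca(6)[of "c-2"] by auto
  qed
qed

lemma Mrow:
  assumes c: "construction X1 X2 X3 x1 y1 x2 y2 x3 z3 \<alpha>" and n: "n \<ge> 1"
  and r: "r < 5*n+3" and u: "dim_vec u = 5*n+3"
  and p: "p = (if r < 5*n+2 then apt x1 y1 x2 y2 x3 z3 \<alpha> (r+2) else bpt y2 z3 \<alpha> n)"
  shows "(Mmat x1 y1 x2 y2 x3 z3 \<alpha> n *\<^sub>v u) $ r =
    (let e = ecol y1 y2 z3 \<alpha>; Wf = (\<lambda>t. if t \<in> e ` {..<5*n+3} then u $ (inv_into {..<5*n+3} e t) else 0)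
     in Wf (fst p) + Wf (fst (snd p)) + Wf (snd (snd p)))"
proof -
  define N where "N = 5*n+3"
  define e where "e = ecol y1 y2 z3 \<alpha>"
  have pF: "p \<in> Fset x1 y1 x2 y2 x3 z3 \<alpha> n"
  proof (cases "r < 5*n+2")
    case True
    then have "r + 2 \<in> {1..5*n+3}" by simp
    then have "apt x1 y1 x2 y2 x3 z3 \<alpha> (r+2) \<in> Dset x1 y1 x2 y2 x3 z3 \<alpha> n" unfolding Dset_def by (rule imageI)
    then show ?thesis using True unfolding p Fset_def by simp
  next
    case False
    then show ?thesis unfolding p Fset_def by simp
  qed
  note pp = pt_props[OF c n pF]
  note cb = cons_basic[OF c]
  have dist: "fst p \<noteq> fst (snd p)" "fst p \<noteq> snd (snd p)" "fst (snd p) \<noteq> snd (snd p)"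
  proof -
    have a: "fst p \<in> X1" "fst (snd p) \<in> X2" "snd (snd p) \<in> X3" using pp by (simp_all only: Int_iff)
    show "fst p \<noteq> fst (snd p)" using a(1,2) cb(1) by (metis disjoint_iff)
    show "fst p \<noteq> snd (snd p)" using a(1,3) cb(2) by (metis disjoint_iff)
    show "fst (snd p) \<noteq> snd (snd p)" using a(2,3) cb(3) by (metis disjoint_iff)
  qed
  let ?M = "Mmat x1 y1 x2 y2 x3 z3 \<alpha> n"
  have Md: "dim_row ?M = N" "dim_col ?M = N" unfolding Mmat_def N_def by simp_all
  have rN: "r < N" using r unfolding N_def .
  have ent: "?M $$ (r, i) = (if e i \<in> coords p then 1 else 0)" if iN: "i < N" for i
    unfolding Mmat_def index_mat[OF r iN[unfolded N_def]] split_conv Let_def p[symmetric] e_def ecol_def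
    by (rule refl)
  have "(?M *\<^sub>v u) $ r = row ?M r \<bullet> u" by (rule index_mult_mat_vec) (simp add: Md rN)
  also have "\<dots> = (\<Sum>i\<in>{0..<N}. row ?M r $ i * u $ i)" unfolding scalar_prod_def u N_def ..
  also have "\<dots> = (\<Sum>c\<in>{0..<N}. (if e c \<in> coords p then 1 else 0) * u $ c)"
    by (rule sum.cong) (auto simp: ent Md rN)
  also have "\<dots> = (\<Sum>c\<in>{..<N}. if e c \<in> {fst p, fst (snd p), snd (snd p)} then u $ c else 0)"
    unfolding coords_def atLeast0LessThan by (intro sum.cong) auto
  also have "\<dots> = (let Wf = (\<lambda>t. if t \<in> e ` {..<N} then u $ (inv_into {..<N} e t) else 0)
     in Wf (fst p) + Wf (fst (snd p)) + Wf (snd (snd p)))"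
    unfolding Let_def by (rule sum_pick[OF ecol_inj[OF c, folded e_def] _ dist]) simp
  finally show ?thesis by (simp only: Let_def N_def e_def)
qed



lemma Mbound:
  assumes c: "construction X1 X2 X3 x1 y1 x2 y2 x3 z3 \<alpha>" and n: "n \<ge> 1"
  and u: "dim_vec u = 5*n+3"
  and b: "\<And>r. r < 5*n+3 \<Longrightarrow> \<bar>(Mmat x1 y1 x2 y2 x3 z3 \<alpha> n *\<^sub>v u) $ r\<bar> \<le> 1"
  and cl: "cc < 5*n+3"
  shows "\<bar>u $ cc\<bar> \<le> 20"
proof -
  define N where "N = 5*n+3"
  define e where "e = ecol y1 y2 z3 \<alpha>"
  define Wf where "Wf = (\<lambda>t. if t \<in> e ` {..<N} then u $ (inv_into {..<N} e t) else 0)"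
  have W0: "Wf x1 = 0" "Wf x2 = 0" "Wf x3 = 0"
    using ecol_x[OF c] unfolding Wf_def e_def by auto
  have row: "(Mmat x1 y1 x2 y2 x3 z3 \<alpha> n *\<^sub>v u) $ r = Wf (fst p) + Wf (fst (snd p)) + Wf (snd (snd p))"
    if "r < 5*n+3" "p = (if r < 5*n+2 then apt x1 y1 x2 y2 x3 z3 \<alpha> (r+2) else bpt y2 z3 \<alpha> n)" for r p
    using Mrow[OF c n that(1) u that(2)] unfolding Wf_def e_def N_def Let_def .
  have pts: "norm (Wf (fst (apt x1 y1 x2 y2 x3 z3 \<alpha> i)) + Wf (fst (snd (apt x1 y1 x2 y2 x3 z3 \<alpha> i)))
       + Wf (snd (snd (apt x1 y1 x2 y2 x3 z3 \<alpha> i)))) \<le> 1" if "2 \<le> i" "i \<le> 5*n+3" for i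
  proof -
    have r: "i - 2 < 5*n+3" using that by linarith
    have "apt x1 y1 x2 y2 x3 z3 \<alpha> i = (if i - 2 < 5*n+2 then apt x1 y1 x2 y2 x3 z3 \<alpha> (i-2+2) else bpt y2 z3 \<alpha> n)"
    proof -
      have e1: "i - 2 + 2 = i" and e2: "i - 2 < 5*n+2" using that by simp_all
      show ?thesis by (simp only: e1 e2 if_True)
    qed
    from row[OF r this] b[OF r] show ?thesis by simp
  qed
  have bp: "norm (Wf (\<alpha> (5*n-1)) + Wf y2 + Wf z3) \<le> 1"
  proof -
    have r: "5*n+2 < 5*n+3" by simp
    have "(\<alpha> (5*n-1), y2, z3) = (if 5*n+2 < 5*n+2 then apt x1 y1 x2 y2 x3 z3 \<alpha> (5*n+2+2) else bpt y2 z3 \<alpha> n)"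
      by (simp add: bpt_def)
    from row[OF r this] b[OF r] show ?thesis by simp
  qed
  note ch = chain[OF n W0 pts bp]
  have inj: "inj_on e {..<N}" unfolding e_def by (rule ecol_inj[OF c])
  have "u $ cc = Wf (e cc)" using cl inv_into_f_f[OF inj] unfolding Wf_def N_def by auto
  moreover have "norm (Wf (e cc)) \<le> 20"
  proof -
    consider "cc = 0" | "cc = 1" | "cc = 2" | "cc \<ge> 3" by linarith
    then show ?thesis
    proof cases
      case 4
      then have "1 \<le> cc - 2" "cc - 2 \<le> 5*n" using cl by linarith+
      then show ?thesis using ch 4 unfolding e_def ecol_def by auto
    qed (use ch in \<open>auto simp: e_def ecol_def\<close>)
  qed
  ultimately show ?thesis by simp
qed

lemma invertible_and_rows:
  assumes c: "construction X1 X2 X3 x1 y1 x2 y2 x3 z3 \<alpha>" and n: "n \<ge> 1"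
  shows "invertible_mat (Mmat x1 y1 x2 y2 x3 z3 \<alpha> n) \<and>
        (\<forall>B. inverts_mat (Mmat x1 y1 x2 y2 x3 z3 \<alpha> n) B \<and> inverts_mat B (Mmat x1 y1 x2 y2 x3 z3 \<alpha> n) \<longrightarrow>
           (\<forall>i < dim_row B. (\<Sum>j < dim_col B. \<bar>B $$ (i, j)\<bar>) \<le> 20))"
proof -
  define N where "N = 5*n+3"
  define M where "M = Mmat x1 y1 x2 y2 x3 z3 \<alpha> n"
  have Mc: "M \<in> carrier_mat N N" unfolding M_def Mmat_def N_def by simp
  have key: "\<bar>u $ j\<bar> \<le> 20" if "u \<in> carrier_vec N" "\<And>r. r < N \<Longrightarrow> \<bar>(M *\<^sub>v u) $ r\<bar> \<le> 1" "j < N" for u j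
    using Mbound[OF c n, of u] that unfolding M_def N_def by auto
  have det: "det M \<noteq> 0"
  proof
    assume "det M = 0"
    then obtain v where v: "v \<in> carrier_vec N" "v \<noteq> 0\<^sub>v N" "M *\<^sub>v v = 0\<^sub>v N"
      using det_0_iff_vec_prod_zero_field[OF Mc] by auto
    obtain j where j: "j < N" "v $ j \<noteq> 0"
      using v(1,2) by (metis carrier_vecD eq_vecI index_zero_vec(1) index_zero_vec(2))
    define s where "s = 21 / \<bar>v $ j\<bar>"
    have uc: "s \<cdot>\<^sub>v v \<in> carrier_vec N" using v(1) by simp
    have "M *\<^sub>v (s \<cdot>\<^sub>v v) = s \<cdot>\<^sub>v (M *\<^sub>v v)" using mult_mat_vec[OF Mc v(1)] .
    also have "\<dots> = 0\<^sub>v N" unfolding v(3) by (intro eq_vecI) auto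
    finally have z: "M *\<^sub>v (s \<cdot>\<^sub>v v) = 0\<^sub>v N" .
    have "\<bar>(s \<cdot>\<^sub>v v) $ j\<bar> \<le> 20" using key[OF uc _ j(1)] z by simp
    moreover have "(s \<cdot>\<^sub>v v) $ j = s * v $ j" using v(1) j(1) by simp
    moreover have "\<bar>s * v $ j\<bar> = 21" using j(2) unfolding s_def by (simp add: abs_mult)
    ultimately show False by simp
  qed
  from det_non_zero_imp_unit[OF Mc det, of "()"]
  obtain B where B: "B \<in> carrier_mat N N" "B * M = 1\<^sub>m N" "M * B = 1\<^sub>m N"
    unfolding Units_def ring_mat_def by auto
  have inv: "invertible_mat M"
    unfolding invertible_mat_def inverts_mat_def using B Mc by auto
  have rows: "(\<Sum>j < dim_col B. \<bar>B $$ (i, j)\<bar>) \<le> 20"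
    if BB: "inverts_mat M B" "inverts_mat B M" and i: "i < dim_row B" for B i
  proof -
    have MB: "M * B = 1\<^sub>m N" using BB(1) Mc unfolding inverts_mat_def by auto
    have dc: "dim_col B = N" using arg_cong[OF MB, of dim_col] by simp
    have BM: "B * M = 1\<^sub>m (dim_row B)" using BB(2) unfolding inverts_mat_def by auto
    have dr: "dim_row B = N" using arg_cong[OF BM, of dim_col] Mc by simp
    have Bc: "B \<in> carrier_mat N N" using dc dr by auto
    define f where "f = vec N (\<lambda>j. sgn (B $$ (i, j)))"
    have fc: "f \<in> carrier_vec N" unfolding f_def by simp
    define u where "u = B *\<^sub>v f"
    have uc: "u \<in> carrier_vec N" unfolding u_def using Bc fc by simp
    have "M *\<^sub>v u = (M * B) *\<^sub>v f" unfolding u_def using Mc Bc fc by simp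
    also have "\<dots> = f" unfolding MB using fc by simp
    finally have Mu: "M *\<^sub>v u = f" .
    have fb: "\<bar>(M *\<^sub>v u) $ r\<bar> \<le> 1" if "r < N" for r
      unfolding Mu f_def using that by (simp add: abs_sgn_eq)
    have iN: "i < N" using i dr by simp
    have "u $ i = (\<Sum>j\<in>{0..<N}. B $$ (i, j) * sgn (B $$ (i, j)))"
      unfolding u_def f_def using iN dr dc by (simp add: scalar_prod_def)
    also have "\<dots> = (\<Sum>j<dim_col B. \<bar>B $$ (i, j)\<bar>)"
      unfolding dc by (simp add: atLeast0LessThan abs_sgn[symmetric])
    finally show ?thesis using key[OF uc fb iN] by simp
  qed
  show ?thesis using inv rows unfolding M_def by blast
qed



lemma complex_part:
  fixes f :: "'a \<times> 'a \<times> 'a \<Rightarrow> complex" and u1 u2 u3 :: "'a \<Rightarrow> complex"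
  assumes c: "construction X1 X2 X3 x1 y1 x2 y2 x3 z3 \<alpha>" and n: "n \<ge> 1"
  and H1: "\<forall>w \<in> Fset x1 y1 x2 y2 x3 z3 \<alpha> n. cmod (f w) \<le> 1"
  and H2: "\<forall>w \<in> Fset x1 y1 x2 y2 x3 z3 \<alpha> n. f w = u1 (fst w) + u2 (fst (snd w)) + u3 (snd (snd w))"
  and H3: "u1 x1 = 0" "u2 x2 = 0" "u3 x3 = 0"
  shows "(\<forall>t \<in> fst ` Fset x1 y1 x2 y2 x3 z3 \<alpha> n. cmod (u1 t) \<le> 20) \<and>
         (\<forall>t \<in> (fst \<circ> snd) ` Fset x1 y1 x2 y2 x3 z3 \<alpha> n. cmod (u2 t) \<le> 20) \<and>
         (\<forall>t \<in> (snd \<circ> snd) ` Fset x1 y1 x2 y2 x3 z3 \<alpha> n. cmod (u3 t) \<le> 20)"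
proof -
  define F where "F = Fset x1 y1 x2 y2 x3 z3 \<alpha> n"
  define G where "G = {x1,x2,x3,y1,y2,z3} \<union> \<alpha> ` {1..5*n}"
  define W where "W t = (if t \<in> X1 then u1 t else if t \<in> X2 then u2 t else u3 t)" for t
  note cb = cons_basic[OF c]
  have d12: "t \<notin> X2" if "t \<in> X1" for t using cb(1) that by blast
  have d13: "t \<notin> X3" if "t \<in> X1" for t using cb(2) that by blast
  have d21: "t \<notin> X1" if "t \<in> X2" for t using cb(1) that by blast
  have d31: "t \<notin> X1" if "t \<in> X3" for t using cb(2) that by blast
  have d32: "t \<notin> X2" if "t \<in> X3" for t using cb(3) that by blast
  have W1: "W t = u1 t" if "t \<in> X1" for t using that unfolding W_def by simp
  have W2: "W t = u2 t" if "t \<in> X2" for t using that d21[OF that] unfolding W_def by simp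
  have W3: "W t = u3 t" if "t \<in> X3" for t using that d31[OF that] d32[OF that] unfolding W_def by simp
  have W0: "W x1 = 0" "W x2 = 0" "W x3 = 0" using W1[OF cb(4)] W2[OF cb(6)] W3[OF cb(8)] H3 by simp_all
  have pp: "fst p \<in> X1 \<inter> G \<and> fst (snd p) \<in> X2 \<inter> G \<and> snd (snd p) \<in> X3 \<inter> G" if "p \<in> F" for p
    using pt_props[OF c n that[unfolded F_def]] unfolding G_def .
  have eqF: "f p = W (fst p) + W (fst (snd p)) + W (snd (snd p))" if "p \<in> F" for p
    using H2 that pp[OF that] W1 W2 W3 unfolding F_def by auto
  have pts: "norm (W (fst (apt x1 y1 x2 y2 x3 z3 \<alpha> i)) + W (fst (snd (apt x1 y1 x2 y2 x3 z3 \<alpha> i)))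
       + W (snd (snd (apt x1 y1 x2 y2 x3 z3 \<alpha> i)))) \<le> 1" if "2 \<le> i" "i \<le> 5*n+3" for i
  proof -
    have "apt x1 y1 x2 y2 x3 z3 \<alpha> i \<in> F" unfolding F_def Fset_def Dset_def using that by auto
    then show ?thesis using eqF H1 unfolding F_def by metis
  qed
  have bp: "norm (W (\<alpha> (5*n-1)) + W y2 + W z3) \<le> 1"
  proof -
    have "(\<alpha> (5*n-1), y2, z3) \<in> F" unfolding F_def Fset_def bpt_def by simp
    then show ?thesis using eqF H1 unfolding F_def by (metis fst_conv snd_conv)
  qed
  note ch = chain[OF n W0 pts bp]
  have Gb: "cmod (W t) \<le> 20" if "t \<in> G" for t
    using that ch W0 unfolding G_def by auto
  have "cmod (u1 t) \<le> 20" if tF: "t \<in> fst ` F" for t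
  proof -
    obtain p where p: "p \<in> F" "t = fst p" using tF unfolding image_iff comp_def by blast
    have tt: "t \<in> X1" "t \<in> G" using pp[OF p(1)] unfolding p(2) by simp_all
    show ?thesis using Gb[OF tt(2)] W1[OF tt(1)] by simp
  qed
  moreover have "cmod (u2 t) \<le> 20" if tF: "t \<in> (fst \<circ> snd) ` F" for t
  proof -
    obtain p where p: "p \<in> F" "t = fst (snd p)" using tF unfolding image_iff comp_def by blast
    have tt: "t \<in> X2" "t \<in> G" using pp[OF p(1)] unfolding p(2) by simp_all
    show ?thesis using Gb[OF tt(2)] W2[OF tt(1)] by simp
  qed
  moreover have "cmod (u3 t) \<le> 20" if tF: "t \<in> (snd \<circ> snd) ` F" for t
  proof -
    obtain p where p: "p \<in> F" "t = snd (snd p)" using tF unfolding image_iff comp_def by blast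
    have tt: "t \<in> X3" "t \<in> G" using pp[OF p(1)] unfolding p(2) by simp_all
    show ?thesis using Gb[OF tt(2)] W3[OF tt(1)] by simp
  qed
  ultimately show ?thesis unfolding F_def by blast
qed

theorem mainTheorem8:
  shows "\<exists>C::real. \<forall>n::nat. n \<ge> 1 \<longrightarrow>
    (\<forall>(X1::'a set) X2 X3 x1 y1 x2 y2 x3 z3 (\<alpha>::nat \<Rightarrow> 'a).
      construction X1 X2 X3 x1 y1 x2 y2 x3 z3 \<alpha> \<longrightarrow>
      (let M = Mmat x1 y1 x2 y2 x3 z3 \<alpha> n; F = Fset x1 y1 x2 y2 x3 z3 \<alpha> n in
        invertible_mat M \<and>
        (\<forall>B. inverts_mat M B \<and> inverts_mat B M \<longrightarrow>
           (\<forall>i < dim_row B. (\<Sum>j < dim_col B. \<bar>B $$ (i, j)\<bar>) \<le> C)) \<and>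
        (\<forall>(f::'a \<times> 'a \<times> 'a \<Rightarrow> complex) (u1::'a \<Rightarrow> complex) u2 u3.
           (\<forall>w \<in> F. cmod (f w) \<le> 1) \<and>
           (\<forall>w \<in> F. f w = u1 (fst w) + u2 (fst (snd w)) + u3 (snd (snd w))) \<and>
           u1 x1 = 0 \<and> u2 x2 = 0 \<and> u3 x3 = 0 \<longrightarrow>
           (\<forall>t \<in> fst ` F. cmod (u1 t) \<le> C) \<and>
           (\<forall>t \<in> (fst \<circ> snd) ` F. cmod (u2 t) \<le> C) \<and>
           (\<forall>t \<in> (snd \<circ> snd) ` F. cmod (u3 t) \<le> C))))"
proof (intro exI[of _ 20] allI impI)
  fix n :: nat and X1 X2 X3 :: "'a set" and x1 y1 x2 y2 x3 z3 :: 'a and \<alpha> :: "nat \<Rightarrow> 'a"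
  assume n: "n \<ge> 1" and c: "construction X1 X2 X3 x1 y1 x2 y2 x3 z3 \<alpha>"
  show "let M = Mmat x1 y1 x2 y2 x3 z3 \<alpha> n; F = Fset x1 y1 x2 y2 x3 z3 \<alpha> n in
        invertible_mat M \<and>
        (\<forall>B. inverts_mat M B \<and> inverts_mat B M \<longrightarrow>
           (\<forall>i < dim_row B. (\<Sum>j < dim_col B. \<bar>B $$ (i, j)\<bar>) \<le> 20)) \<and>
        (\<forall>(f::'a \<times> 'a \<times> 'a \<Rightarrow> complex) (u1::'a \<Rightarrow> complex) u2 u3.
           (\<forall>w \<in> F. cmod (f w) \<le> 1) \<and>
           (\<forall>w \<in> F. f w = u1 (fst w) + u2 (fst (snd w)) + u3 (snd (snd w))) \<and>
           u1 x1 = 0 \<and> u2 x2 = 0 \<and> u3 x3 = 0 \<longrightarrow>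
           (\<forall>t \<in> fst ` F. cmod (u1 t) \<le> 20) \<and>
           (\<forall>t \<in> (fst \<circ> snd) ` F. cmod (u2 t) \<le> 20) \<and>
           (\<forall>t \<in> (snd \<circ> snd) ` F. cmod (u3 t) \<le> 20))"
    unfolding Let_def using invertible_and_rows[OF c n] complex_part[OF c n] by blast
qed

end
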